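(* Let $f\in\mathcal{CM}$ with $\omega_0=\omega_0^f>-\infty$, and define $g:(0,\infty)\to\mathbb{R}$ by $g(\lambda):=f_e(\lambda+\omega_0)$. Assume that $g$ (which is completely monotone) satisfies: its representing measure has a density $(0,\infty)\to(0,\infty)$; there is $\lambda_0>0$ with $\frac{(-\lambda)^n g^{(n)}(\lambda)}{n!}\ge\frac{(-\lambda)^{n+1}g^{(n+1)}(\lambda)}{(n+1)!}$ for all $n\in\mathbb{N}\cup\{0\}$, $\lambda>\lambda_0$; and $\lim_{\lambda\to\infty}g(\lambda)=0$. Then the representing measure of $f$ has a density $\nu(t)$ such that $t\mapsto e^{-\omega_0 t}\nu(t)$ is non-increasing on $(0,\infty)$.
   Context: A function $f:(0,\infty)\to\mathbb{R}$ is completely monotone, $f\in\mathcal{CM}$, if it is $C^\infty$ and $(-1)^n f^{(n)}(\lambda)\ge0$ for all $n\ge0$, $\lambda>0$; its representing measure is the unique measure $\nu$ on $[0,\infty)$ with $f(\lambda)=\int_{[0,\infty)}e^{-\lambda t}\nu(dt)$. For $n\ge0$, $f^{(n)}(0+):=\lim_{\lambda\to0+}f^{(n)}(\lambda)\in[-\infty,\infty]$. If all $f^{(n)}(0+)$ are finite, $\omega_0=\omega_0^f:=\inf\{\lambda\in\mathbb{R}:\sum_{n\ge0}\frac{f^{(n)}(0+)}{n!}\lambda^n\text{ converges}\}$; otherwise $\omega_0:=0$. The extension $f_e:(\omega_0,\infty)\to\mathbb{R}$ is $f_e(\lambda)=\sum_{n\ge0}\frac{f^{(n)}(0+)}{n!}\lambda^n$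 for $\omega_0<\lambda\le0$ and $f_e(\lambda)=f(\lambda)$ for $\lambda>0$. *)

theory Defs
  imports "HOL-Analysis.Analysis" "HOL-Probability.Probability"
begin

definition CM :: "(real \<Rightarrow> real) \<Rightarrow> bool" where
  "CM f \<longleftrightarrow> (\<forall>n. \<forall>x>0. ((deriv ^^ n) f) differentiable (at x)) \<and>
              (\<forall>n. \<forall>x>0. (-1) ^ n * (deriv ^^ n) f x \<ge> 0)"

definition rep_measure :: "(real \<Rightarrow> real) \<Rightarrow> real measure \<Rightarrow> bool" where
  "rep_measure f \<mu> \<longleftrightarrow> sets \<mu> = sets borel \<and> emeasure \<mu> {..<0} = 0 \<and>
     (\<forall>s>0. integrable \<mu> (\<lambda>t. exp (- s * t)) \<and> f s = (\<integral>t. exp (- s * t) \<partial>\<mu>))"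

definition has_density_on_pos :: "real measure \<Rightarrow> (real \<Rightarrow> real) \<Rightarrow> bool" where
  "has_density_on_pos \<mu> d \<longleftrightarrow> d \<in> borel_measurable borel \<and> (\<forall>t>0. d t \<ge> 0) \<and>
     \<mu> = density lborel (\<lambda>t. ennreal (indicator {0<..} t * d t))"

definition deriv0 :: "(real \<Rightarrow> real) \<Rightarrow> nat \<Rightarrow> real" where
  "deriv0 f n = Lim (at_right 0) ((deriv ^^ n) f)"

definition all_deriv0_finite :: "(real \<Rightarrow> real) \<Rightarrow> bool" where
  "all_deriv0_finite f \<longleftrightarrow> (\<forall>n. \<exists>L. ((deriv ^^ n) f \<longlongrightarrow> L) (at_right 0))"

definition omega0 :: "(real \<Rightarrow> real) \<Rightarrow> ereal" where
  "omega0 f = (if all_deriv0_finite f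
     then Inf (ereal ` {x. summable (\<lambda>n. deriv0 f n / fact n * x ^ n)}) else 0)"

definition f_ext :: "(real \<Rightarrow> real) \<Rightarrow> real \<Rightarrow> real" where
  "f_ext f x = (if x \<le> 0 then (\<Sum>n. deriv0 f n / fact n * x ^ n) else f x)"

end

theory Submission
  imports Defs
begin


lemma pow_le_exp:
  fixes x :: real assumes "0 \<le> x"
  shows "x ^ k / fact k \<le> exp x"
proof -
  have s: "(\<lambda>n. x^n / fact n) sums exp x"
    using exp_converges[of x] by (simp add: divide_inverse_commute field_class.field_divide_inverse scaleR_conv_of_real mult.commute)
  have "x ^ k / fact k \<le> (\<Sum>n. x^n / fact n)"
    apply (rule sum_le_suminf[where I="{k}", simplified])
    using s assms by (auto simp: sums_iff)
  then show ?thesis using s by (simp add: sums_iff)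
qed

lemma partial_exp_le:
  fixes x :: real assumes "0 \<le> x" "finite I"
  shows "(\<Sum>n\<in>I. x ^ n / fact n) \<le> exp x"
proof -
  have s: "(\<lambda>n. x^n / fact n) sums exp x"
    using exp_converges[of x] by (simp add: divide_inverse_commute field_class.field_divide_inverse scaleR_conv_of_real mult.commute)
  have "(\<Sum>n\<in>I. x ^ n / fact n) \<le> (\<Sum>n. x^n / fact n)"
    apply (rule sum_le_suminf)
    using s assms by (auto simp: sums_iff)
  then show ?thesis using s by (simp add: sums_iff)
qed

lemma abs_exp_minus_one: "\<bar>exp (x::real) - 1\<bar> \<le> \<bar>x\<bar> * exp \<bar>x\<bar>"
proof (cases "x \<ge> 0")
  case True
  have "1 - x \<le> exp (-x)" using exp_ge_add_one_self[of "-x"] by simp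
  then have "exp x * (1 - x) \<le> 1" by (simp add: exp_minus field_simps)
  then show ?thesis using True by (simp add: algebra_simps)
next
  case False
  have "1 - exp x \<le> -x" using exp_ge_add_one_self[of x] by linarith
  moreover have "- x * 1 \<le> -x * exp (-x)" using False by (intro mult_left_mono) auto
  moreover have "\<bar>exp x - 1\<bar> = 1 - exp x" using False by simp
  moreover have "\<bar>x\<bar> * exp \<bar>x\<bar> = -x * exp (-x)" using False by simp
  ultimately show ?thesis by linarith
qed


locale lap =
  fixes M :: "real measure" and c :: real
  assumes sets_M: "sets M = sets borel" and neg0: "emeasure M {..<0} = 0" and c0: "0 \<le> c"
    and intexp: "\<And>s. s > c \<Longrightarrow> integrable M (\<lambda>t. exp (- s * t))"
begin
lemma bM: "borel_measurable M = borel_measurable borel"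
  using measurable_cong_sets[OF sets_M refl] by blast
lemma AE_nonneg: "AE t in M. 0 \<le> t"
proof (rule AE_I')
  show "{..<0} \<in> null_sets M" using neg0 by (auto simp: null_sets_def sets_M)
qed (auto simp: not_le)
lemma int_pow:
  assumes "s > c"
  shows "integrable M (\<lambda>t. t ^ k * exp (- s * t))"
proof -
  define s' where "s' = (s + c) / 2"
  define e where "e = s - s'"
  have e: "e > 0" "s' > c" using assms by (auto simp: e_def s'_def)
  show ?thesis
  proof (rule Bochner_Integration.integrable_bound[where f="\<lambda>t. (fact k / e ^ k) * exp (- s' * t)"])
    show "integrable M (\<lambda>t. (fact k / e ^ k) * exp (- s' * t))"
      using intexp[OF e(2)] by simp
    show "(\<lambda>t. t ^ k * exp (- s * t)) \<in> borel_measurable M" unfolding bM by measurable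
    show "AE t in M. norm (t ^ k * exp (- s * t)) \<le> norm (fact k / e ^ k * exp (- s' * t))"
      using AE_nonneg
    proof eventually_elim
      case (elim t)
      have "(e * t) ^ k / fact k \<le> exp (e * t)" using pow_le_exp[of "e*t" k] elim e by simp
      then have "t ^ k \<le> fact k / e ^ k * exp (e * t)"
        using e by (simp add: field_simps power_mult_distrib)
      then have "t ^ k * exp (- s * t) \<le> fact k / e ^ k * exp (e * t) * exp (- s * t)"
        by (rule mult_right_mono) simp
      also have "\<dots> = fact k / e ^ k * exp (- s' * t)"
        by (simp add: e_def mult.assoc mult_exp_exp algebra_simps)
      finally show ?case using elim e by simp
    qed
  qed
qed


lemma int_pow': "s > c \<Longrightarrow> integrable M (\<lambda>t. (- t) ^ k * exp (- s * t))"
proof -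
  assume "s > c"
  then have "integrable M (\<lambda>t. (-1)^k * (t ^ k * exp (- s * t)))"
    by (intro integrable_mult_right int_pow)
  moreover have "\<And>t. (- t) ^ k * exp (- s * t) = (-1)^k * (t ^ k * exp (- s * t))"
    by (subst power_minus) (simp only: mult.assoc)
  ultimately show ?thesis by (simp only:)
qed


definition Lk :: "nat \<Rightarrow> real \<Rightarrow> real" where
  "Lk k s = (\<integral>t. (- t) ^ k * exp (- s * t) \<partial>M)"

lemma Lk_deriv:
  assumes "s > c"
  shows "(Lk k has_real_derivative Lk (Suc k) s) (at s)"
  unfolding has_field_derivative_iff tendsto_at_iff_sequentially
proof (intro allI impI)
  fix X :: "nat \<Rightarrow> real" assume X: "\<forall>i. X i \<in> UNIV - {s}" "X \<longlonglongrightarrow> s"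
  define d where "d = (s - c) / 3"
  have d: "d > 0" using assms by (simp add: d_def)
  from X(2) d obtain N where N: "\<And>i. i \<ge> N \<Longrightarrow> \<bar>X i - s\<bar> < d"
    unfolding LIMSEQ_def dist_real_def by blast
  define Y where "Y i = X (i + N)" for i
  have Y: "\<bar>Y i - s\<bar> < d" "Y i \<noteq> s" for i using N X(1) by (auto simp: Y_def)
  have Yc: "Y i > c" for i
  proof -
    have "-(Y i - s) < d" using Y(1)[of i] unfolding abs_less_iff by blast
    then show ?thesis using assms unfolding d_def by argo
  qed
  define q where "q i t = (- t) ^ k * ((exp (- Y i * t) - exp (- s * t)) / (Y i - s))" for i t
  have eq: "(Lk k (Y i) - Lk k s) / (Y i - s) = (\<integral>t. q i t \<partial>M)" for i
  proof -
    have "Lk k (Y i) - Lk k s = (\<integral>t. (- t) ^ k * exp (- Y i * t) - (- t) ^ k * exp (- s * t) \<partial>M)"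
      unfolding Lk_def using int_pow'[OF Yc[of i]] int_pow'[OF assms] by simp
    then show ?thesis unfolding q_def
      by (simp add: integral_divide_zero[symmetric] right_diff_distrib diff_divide_distrib)
  qed
  have lim: "(\<lambda>i. \<integral>t. q i t \<partial>M) \<longlonglongrightarrow> Lk (Suc k) s"
    unfolding Lk_def
  proof (rule integral_dominated_convergence[where w="\<lambda>t. t ^ (Suc k) * exp (- (s - d) * t)"])
    show "(\<lambda>t. (- t) ^ Suc k * exp (- s * t)) \<in> borel_measurable M" unfolding bM by measurable
    show "\<And>i. q i \<in> borel_measurable M" unfolding q_def bM by measurable
    show "integrable M (\<lambda>t. t ^ Suc k * exp (- (s - d) * t))"
      by (rule int_pow) (use assms in \<open>simp add: d_def field_simps\<close>)
    show "AE t in M. (\<lambda>i. q i t) \<longlonglongrightarrow> (- t) ^ Suc k * exp (- s * t)"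
    proof (rule AE_I2)
      fix t
      have D: "((\<lambda>y. exp (- y * t)) has_real_derivative (- t * exp (- s * t))) (at s)"
        by (auto intro!: derivative_eq_intros)
      have "((\<lambda>y. (exp (- y * t) - exp (- s * t)) / (y - s)) \<longlongrightarrow> - t * exp (- s * t)) (at s)"
        using D unfolding has_field_derivative_iff .
      moreover have "Y \<longlonglongrightarrow> s" using X(2) unfolding Y_def by (rule LIMSEQ_ignore_initial_segment)
      ultimately have "(\<lambda>i. (exp (- Y i * t) - exp (- s * t)) / (Y i - s)) \<longlonglongrightarrow> - t * exp (- s * t)"
        unfolding tendsto_at_iff_sequentially using Y(2) by (auto simp: o_def)
      then have "(\<lambda>i. (- t) ^ k * ((exp (- Y i * t) - exp (- s * t)) / (Y i - s))) \<longlonglongrightarrow> (- t) ^ k * (- t * exp (- s * t))"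
        by (intro tendsto_mult tendsto_const)
      then show "(\<lambda>i. q i t) \<longlonglongrightarrow> (- t) ^ Suc k * exp (- s * t)"
        unfolding q_def by (simp add: ac_simps)
    qed
    show "AE t in M. norm (q i t) \<le> t ^ Suc k * exp (- (s - d) * t)" for i
      using AE_nonneg
    proof eventually_elim
      case (elim t)
      have h: "Y i - s \<noteq> 0" using Y(2)[of i] by simp
      have ee: "exp (- s * t) * exp (- (Y i - s) * t) = exp (- Y i * t)"
        by (simp only: mult_exp_exp) (simp add: algebra_simps)
      have "exp (- Y i * t) - exp (- s * t) = exp (- s * t) * (exp (- (Y i - s) * t) - 1)"
        by (simp only: right_diff_distrib ee mult_1_right)
      then have "\<bar>exp (- Y i * t) - exp (- s * t)\<bar> = exp (- s * t) * \<bar>exp (- (Y i - s) * t) - 1\<bar>"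
        by (simp add: abs_mult)
      also have "\<dots> \<le> exp (- s * t) * (\<bar>- (Y i - s) * t\<bar> * exp \<bar>- (Y i - s) * t\<bar>)"
        by (intro mult_left_mono abs_exp_minus_one) simp
      also have "\<dots> \<le> exp (- s * t) * (\<bar>Y i - s\<bar> * t * exp (d * t))"
        using elim Y(1)[of i] by (intro mult_left_mono mult_mono) (auto simp: abs_mult intro!: mult_right_mono)
      finally have 1: "\<bar>(exp (- Y i * t) - exp (- s * t)) / (Y i - s)\<bar> \<le> exp (- s * t) * t * exp (d * t)"
        using h by (simp add: abs_divide field_simps)
      have "norm (q i t) = t ^ k * \<bar>(exp (- Y i * t) - exp (- s * t)) / (Y i - s)\<bar>"
        unfolding q_def using elim by (simp add: abs_mult power_abs)
      also have "\<dots> \<le> t ^ k * (exp (- s * t) * t * exp (d * t))"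
        using 1 elim by (intro mult_left_mono) auto
      also have "\<dots> = t ^ Suc k * exp (- (s - d) * t)"
        by (simp add: mult_exp_exp algebra_simps)
      finally show ?case .
    qed
  qed
  show "((\<lambda>y. (Lk k y - Lk k s) / (y - s)) \<circ> X) \<longlonglongrightarrow> Lk (Suc k) s"
  proof (rule LIMSEQ_offset[where k=N])
    have "(\<lambda>i. ((\<lambda>y. (Lk k y - Lk k s) / (y - s)) \<circ> X) (i + N)) = (\<lambda>i. \<integral>t. q i t \<partial>M)"
      using eq by (simp add: Y_def o_def)
    then show "(\<lambda>i. ((\<lambda>y. (Lk k y - Lk k s) / (y - s)) \<circ> X) (i + N)) \<longlonglongrightarrow> Lk (Suc k) s"
      using lim by simp
  qed
qed

end


definition poi :: "nat \<Rightarrow> real \<Rightarrow> real" where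
  "poi n u = u ^ n / fact n * exp (- u)"

lemma poi_nonneg: "0 \<le> u \<Longrightarrow> 0 \<le> poi n u"
  by (simp add: poi_def)

lemma poi_sums: "(\<lambda>n. poi n u) sums 1"
proof -
  have s: "(\<lambda>n. u^n / fact n) sums exp u"
    using exp_converges[of u] by (simp add: divide_inverse_commute field_class.field_divide_inverse scaleR_conv_of_real mult.commute)
  have "(\<lambda>n. u^n / fact n * exp (-u)) sums (exp u * exp (-u))"
    by (rule sums_mult2[OF s])
  then show ?thesis by (simp add: poi_def exp_minus_inverse)
qed

lemma poi_Suc: "poi (Suc n) u = u * poi n u / real (Suc n)"
  by (simp add: poi_def field_simps)

lemma poi_sums1: "(\<lambda>n. real n * poi n u) sums u"
proof -
  have "(\<lambda>n. u * poi n u) sums (u * 1)" by (rule sums_mult[OF poi_sums])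
  moreover have "(\<lambda>n. real (Suc n) * poi (Suc n) u) = (\<lambda>n. u * poi n u)"
    by (auto simp: poi_Suc simp del: of_nat_Suc)
  ultimately have "(\<lambda>n. real (Suc n) * poi (Suc n) u) sums u" by simp
  then show ?thesis by (subst (asm) sums_Suc_iff) simp
qed

lemma poi_sums2: "(\<lambda>n. real n * (real n - 1) * poi n u) sums (u^2)"
proof -
  have "(\<lambda>n. u * (real n * poi n u)) sums (u * u)" by (rule sums_mult[OF poi_sums1])
  moreover have "(\<lambda>n. real (Suc n) * (real (Suc n) - 1) * poi (Suc n) u) = (\<lambda>n. u * (real n * poi n u))"
    by (auto simp: poi_Suc simp del: of_nat_Suc)
  ultimately have "(\<lambda>n. real (Suc n) * (real (Suc n) - 1) * poi (Suc n) u) sums (u^2)"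
    by (simp add: power2_eq_square)
  then show ?thesis by (subst (asm) sums_Suc_iff) simp
qed

lemma poi_var: "(\<lambda>n. (real n - u)^2 * poi n u) sums u"
proof -
  have "(\<lambda>n. real n * (real n - 1) * poi n u + real n * poi n u - 2 * u * (real n * poi n u) + u^2 * poi n u)
        sums (u^2 + u - 2 * u * u + u^2 * 1)"
    by (intro sums_add sums_diff sums_mult poi_sums poi_sums1 poi_sums2)
  moreover have "(\<lambda>n. real n * (real n - 1) * poi n u + real n * poi n u - 2 * u * (real n * poi n u) + u^2 * poi n u)
      = (\<lambda>n. (real n - u)^2 * poi n u)"
    by (auto simp: power2_eq_square algebra_simps)
  ultimately show ?thesis by (simp add: power2_eq_square)
qed

lemma poi_cheb_inf:
  assumes u: "0 \<le> u" and d: "0 < d" and S: "\<And>n. n \<in> S \<Longrightarrow> d \<le> \<bar>real n - u\<bar>"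
  shows "(\<Sum>n. indicator S n * poi n u) \<le> u / d^2"
proof -
  have le: "indicator S n * poi n u \<le> (real n - u)^2 * poi n u / d^2" for n
  proof (cases "n \<in> S")
    case True
    have "d^2 \<le> (real n - u)^2"
      using S[OF True] d by (metis abs_of_pos abs_le_square_iff less_imp_le power2_abs)
    then have "1 \<le> (real n - u)^2 / d^2" using d by simp
    then show ?thesis using True poi_nonneg[OF u, of n]
      using mult_right_mono[OF \<open>1 \<le> _\<close> poi_nonneg[OF u, of n]] by (simp add: field_simps)
  next
    case False then show ?thesis using poi_nonneg[OF u, of n] by simp
  qed
  have s2: "(\<lambda>n. (real n - u)^2 * poi n u / d^2) sums (u / d^2)"
    by (rule sums_divide[OF poi_var[of u]])
  have s1: "summable (\<lambda>n. indicator S n * poi n u)"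
    by (rule summable_comparison_test'[where g="\<lambda>n. (real n - u)^2 * poi n u / d^2"])
       (use s2 le poi_nonneg[OF u] in \<open>auto simp: sums_iff\<close>)
  have "(\<Sum>n. indicator S n * poi n u) \<le> (\<Sum>n. (real n - u)^2 * poi n u / d^2)"
    by (rule suminf_le[OF le s1]) (use s2 in \<open>simp add: sums_iff\<close>)
  then show ?thesis using s2 by (simp add: sums_iff)
qed

lemma poi_finite_sum_eq:
  assumes "finite I"
  shows "(\<Sum>n\<in>I. poi n u) = (\<Sum>n. indicator I n * poi n u)"
proof -
  have "(\<lambda>n. indicator I n * poi n u) sums (\<Sum>n\<in>I. indicator I n * poi n u)"
    by (rule sums_finite[OF assms]) (auto simp: indicator_def)
  then show ?thesis by (simp add: sums_iff)
qed

lemma poi_cheb_fin: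
  assumes u: "0 \<le> u" and d: "0 < d" and I: "finite I" and S: "\<And>n. n \<in> I \<Longrightarrow> d \<le> \<bar>real n - u\<bar>"
  shows "(\<Sum>n\<in>I. poi n u) \<le> u / d^2"
  using poi_cheb_inf[OF u d S] poi_finite_sum_eq[OF I] by simp

lemma poi_cheb_compl:
  assumes u: "0 \<le> u" and d: "0 < d" and I: "finite I" and S: "\<And>n. n \<notin> I \<Longrightarrow> d \<le> \<bar>real n - u\<bar>"
  shows "1 - (\<Sum>n\<in>I. poi n u) \<le> u / d^2"
proof -
  have a: "(\<lambda>n. indicator I n * poi n u) sums (\<Sum>n\<in>I. poi n u)"
    using poi_finite_sum_eq[OF I] sums_finite[OF I, of "\<lambda>n. indicator I n * poi n u"]
    by (simp add: indicator_def sums_iff)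
  have "(\<lambda>n. poi n u - indicator I n * poi n u) sums (1 - (\<Sum>n\<in>I. poi n u))"
    by (rule sums_diff[OF poi_sums a])
  moreover have "(\<lambda>n. poi n u - indicator I n * poi n u) = (\<lambda>n. indicator (- I) n * poi n u)"
    by (auto simp: indicator_def)
  ultimately have "(\<Sum>n. indicator (- I) n * poi n u) = 1 - (\<Sum>n\<in>I. poi n u)"
    by (simp add: sums_iff)
  moreover have "(\<Sum>n. indicator (- I) n * poi n u) \<le> u / d^2"
    by (rule poi_cheb_inf[OF u d]) (use S in auto)
  ultimately show ?thesis by simp
qed

lemma poi_sum_le1:
  assumes u: "0 \<le> u" and I: "finite I"
  shows "(\<Sum>n\<in>I. poi n u) \<le> 1"
proof -
  have "(\<Sum>n\<in>I. poi n u) = (\<Sum>n\<in>I. u ^ n / fact n) * exp (- u)"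
    by (simp add: poi_def sum_distrib_right)
  also have "\<dots> \<le> exp u * exp (- u)"
    by (intro mult_right_mono partial_exp_le u I) simp
  finally show ?thesis by (simp add: exp_minus_inverse)
qed

lemma poi_chernoff:
  assumes u: "0 \<le> u" and I: "finite I" and B: "\<And>n. n \<in> I \<Longrightarrow> real n \<le> b"
  shows "(\<Sum>n\<in>I. poi n u) \<le> exp (b - u / 2)"
proof -
  have e2: "2 \<le> exp (1::real)" using exp_ge_add_one_self[of 1] by simp
  have "poi n u \<le> exp b * ((u / exp 1) ^ n / fact n) * exp (- u)" if "n \<in> I" for n
  proof -
    have "exp (real n) \<le> exp b" using B[OF that] by simp
    then have "1 \<le> exp b / exp (real n)" by simp
    moreover have "exp (real n) = exp 1 ^ n" by (simp add: exp_of_nat_mult[symmetric])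
    ultimately have "1 \<le> exp b / exp 1 ^ n" by simp
    then have "u ^ n / fact n * exp (- u) * 1 \<le> u ^ n / fact n * exp (- u) * (exp b / exp 1 ^ n)"
      by (intro mult_left_mono) (use u in auto)
    then show ?thesis by (simp add: poi_def power_divide field_simps)
  qed
  then have "(\<Sum>n\<in>I. poi n u) \<le> (\<Sum>n\<in>I. exp b * ((u / exp 1) ^ n / fact n) * exp (- u))"
    by (rule sum_mono)
  also have "\<dots> = exp b * exp (- u) * (\<Sum>n\<in>I. (u / exp 1) ^ n / fact n)"
    by (simp add: sum_distrib_left sum_distrib_right ac_simps)
  also have "\<dots> \<le> exp b * exp (- u) * exp (u / exp 1)"
    by (intro mult_left_mono partial_exp_le I) (use u in auto)
  also have "\<dots> \<le> exp b * exp (- u) * exp (u / 2)"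
  proof -
    have "u / exp 1 \<le> u / 2" using e2 u by (intro divide_left_mono) auto
    then show ?thesis by (intro mult_left_mono) auto
  qed
  also have "\<dots> = exp (b - u / 2)"
    by (simp only: mult_exp_exp) (rule arg_cong[where f=exp], simp)
  finally show ?thesis .
qed


definition Win :: "real \<Rightarrow> real \<Rightarrow> real \<Rightarrow> nat set" where
  "Win p q l = {nat \<lceil>p * l\<rceil> ..< nat \<lceil>q * l\<rceil>}"

definition Wf :: "real \<Rightarrow> real \<Rightarrow> real \<Rightarrow> real \<Rightarrow> real" where
  "Wf p q l t = (\<Sum>n\<in>Win p q l. poi n (l * t))"

lemma finite_Win[simp]: "finite (Win p q l)"
  by (simp add: Win_def)

lemma Win_lower: "0 \<le> p \<Longrightarrow> 0 \<le> l \<Longrightarrow> n \<in> Win p q l \<Longrightarrow> p * l \<le> real n"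
  unfolding Win_def by (auto simp: le_nat_iff ceiling_le_iff)

lemma Win_upper: "n \<in> Win p q l \<Longrightarrow> real n < q * l"
proof -
  assume "n \<in> Win p q l"
  then have "int n < \<lceil>q * l\<rceil>" unfolding Win_def by auto
  then have "int n \<le> \<lceil>q * l\<rceil> - 1" by simp
  then have "real n \<le> real_of_int \<lceil>q * l\<rceil> - 1" by linarith
  then show ?thesis using ceiling_correct[of "q*l"] by linarith
qed

lemma notWin: "0 \<le> p \<Longrightarrow> n \<notin> Win p q l \<Longrightarrow> real n < p * l \<or> q * l \<le> real n"
proof -
  assume "n \<notin> Win p q l" "0 \<le> p"
  then have "\<not> (nat \<lceil>p * l\<rceil> \<le> n \<and> n < nat \<lceil>q * l\<rceil>)" unfolding Win_def atLeastLessThan_iff by blast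
  then have "n < nat \<lceil>p * l\<rceil> \<or> nat \<lceil>q * l\<rceil> \<le> n" by (meson not_le)
  then show ?thesis
  proof
    assume "n < nat \<lceil>p * l\<rceil>"
    then have "int n < \<lceil>p * l\<rceil>" by linarith
    then have "int n \<le> \<lceil>p * l\<rceil> - 1" by simp
    then have "real n \<le> real_of_int \<lceil>p * l\<rceil> - 1" by linarith
    then show ?thesis using ceiling_correct[of "p*l"] by linarith
  next
    assume "nat \<lceil>q * l\<rceil> \<le> n"
    then have "\<lceil>q * l\<rceil> \<le> int n" by linarith
    then have "q * l \<le> real n" using ceiling_le_iff[of "q*l" "int n"] by simp
    then show ?thesis by simp
  qed
qed

lemma Wf_nonneg: "0 \<le> l \<Longrightarrow> 0 \<le> t \<Longrightarrow> 0 \<le> Wf p q l t"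
  unfolding Wf_def by (intro sum_nonneg poi_nonneg) simp

lemma Wf_le1: "0 \<le> l \<Longrightarrow> 0 \<le> t \<Longrightarrow> Wf p q l t \<le> 1"
  unfolding Wf_def by (intro poi_sum_le1) auto

lemma Wf_in:
  assumes "0 \<le> p" "p < t" "t < q"
  shows "(\<lambda>j. Wf p q (real j) t) \<longlonglongrightarrow> 1"
proof -
  define d where "d = min (t - p) (q - t)"
  have d: "d > 0" using assms by (simp add: d_def)
  have t0: "t \<ge> 0" using assms by simp
  have lo: "1 - (t / d^2) / real j \<le> Wf p q (real j) t" if j: "j \<ge> 1" for j
  proof -
    have jd: "real j * d > 0" using j d by simp
    have "1 - Wf p q (real j) t \<le> (real j * t) / (real j * d)^2"
      unfolding Wf_def
    proof (rule poi_cheb_compl)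
      fix n assume n: "n \<notin> Win p q (real j)"
      from notWin[OF assms(1) n] show "real j * d \<le> \<bar>real n - real j * t\<bar>"
      proof
        assume "real n < p * real j"
        moreover have "d \<le> t - p" by (simp add: d_def)
        ultimately have "real j * d \<le> real j * t - real n" using j
          by (smt (verit) mult.commute mult_left_mono of_nat_0_le_iff right_diff_distrib)
        then show ?thesis by linarith
      next
        assume "q * real j \<le> real n"
        moreover have "d \<le> q - t" by (simp add: d_def)
        ultimately have "real j * d \<le> real n - real j * t" using j
          by (smt (verit) mult.commute mult_left_mono of_nat_0_le_iff right_diff_distrib)
        then show ?thesis by linarith
      qed
    qed (use t0 jd in auto)
    also have "(real j * t) / (real j * d)^2 = (t / d^2) / real j"
      using j d by (simp add: power2_eq_square field_simps)
    finally show ?thesis by linarith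
  qed
  show ?thesis
  proof (rule tendsto_sandwich)
    show "\<forall>\<^sub>F j in sequentially. 1 - (t / d^2) / real j \<le> Wf p q (real j) t"
      using lo by (auto simp: eventually_sequentially)
    show "\<forall>\<^sub>F j in sequentially. Wf p q (real j) t \<le> 1"
      using Wf_le1 t0 by auto
    show "(\<lambda>j. 1 - (t / d^2) / real j) \<longlonglongrightarrow> 1"
      using tendsto_diff[OF tendsto_const lim_const_over_n[of "t / d^2"]] by simp
  qed simp
qed

lemma Wf_out:
  assumes "0 \<le> p" "p \<le> q" "0 \<le> t" "t < p \<or> q < t"
  shows "(\<lambda>j. Wf p q (real j) t) \<longlonglongrightarrow> 0"
proof -
  define d where "d = (if t < p then p - t else t - q)"
  have d: "d > 0" using assms by (auto simp: d_def)
  have up: "Wf p q (real j) t \<le> (t / d^2) / real j" if j: "j \<ge> 1" for j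
  proof -
    have jd: "real j * d > 0" using j d by simp
    have "Wf p q (real j) t \<le> (real j * t) / (real j * d)^2"
      unfolding Wf_def
    proof (rule poi_cheb_fin)
      fix n assume n: "n \<in> Win p q (real j)"
      have l: "p * real j \<le> real n" by (rule Win_lower[OF assms(1) _ n]) simp
      have u: "real n < q * real j" by (rule Win_upper[OF n])
      show "real j * d \<le> \<bar>real n - real j * t\<bar>"
      proof (cases "t < p")
        case True
        then have "d = p - t" by (simp add: d_def)
        then have "real j * d \<le> real n - real j * t" using l
          by (simp add: right_diff_distrib mult.commute)
        then show ?thesis by linarith
      next
        case False
        then have "d = t - q" by (simp add: d_def)
        then have "real j * d \<le> real j * t - real n" using u
          by (simp add: right_diff_distrib mult.commute)
        then show ?thesis by linarith
      qed
    qed (use assms jd in auto)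
    also have "(real j * t) / (real j * d)^2 = (t / d^2) / real j"
      using j d by (simp add: power2_eq_square field_simps)
    finally show ?thesis .
  qed
  show ?thesis
  proof (rule tendsto_sandwich)
    show "\<forall>\<^sub>F j in sequentially. 0 \<le> Wf p q (real j) t"
      using Wf_nonneg assms by auto
    show "\<forall>\<^sub>F j in sequentially. Wf p q (real j) t \<le> (t / d^2) / real j"
      using up by (auto simp: eventually_sequentially)
    show "(\<lambda>j. (t / d^2) / real j) \<longlonglongrightarrow> 0"
      by (rule lim_const_over_n)
  qed simp
qed

lemma Wf_bound:
  assumes "0 < C" "0 \<le> q" "4 * C \<le> l" "0 \<le> t"
  shows "Wf p q l t \<le> exp (4 * q * C) * exp (- C * t)"
proof (cases "t \<ge> 4 * q")
  case True
  have l0: "0 \<le> l" using assms by simp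
  have "Wf p q l t \<le> exp (q * l - (l * t) / 2)"
    unfolding Wf_def
    by (rule poi_chernoff) (use assms Win_upper l0 in \<open>auto intro: less_imp_le\<close>)
  also have "\<dots> \<le> exp (- C * t)"
  proof -
    have "q * l \<le> l * t / 4" using True l0 by (simp add: field_simps mult_left_mono)
    moreover have "4 * C * t \<le> l * t" by (rule mult_right_mono) (use assms in auto)
    then have "C * t \<le> l * t / 4" by simp
    ultimately show ?thesis by simp
  qed
  also have "\<dots> \<le> exp (4 * q * C) * exp (- C * t)"
    using assms by simp
  finally show ?thesis .
next
  case False
  have "Wf p q l t \<le> 1" using Wf_le1 assms by simp
  also have "1 \<le> exp (4 * q * C - C * t)"
    using False assms by (simp add: mult_right_mono)
  also have "\<dots> = exp (4 * q * C) * exp (- C * t)"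
    by (simp add: exp_diff exp_minus field_simps)
  finally show ?thesis .
qed

lemma card_Win: "card (Win p q l) = nat \<lceil>q * l\<rceil> - nat \<lceil>p * l\<rceil>"
  by (simp add: Win_def)

lemma card_Win_lim:
  assumes "0 \<le> p" "p \<le> q"
  shows "(\<lambda>j. real (card (Win p q (real j))) / real j) \<longlonglongrightarrow> q - p"
proof -
  have eq: "real (card (Win p q (real j))) = real_of_int \<lceil>q * real j\<rceil> - real_of_int \<lceil>p * real j\<rceil>" for j
  proof -
    have pj: "0 \<le> p * real j" using assms by simp
    have qj: "p * real j \<le> q * real j" using assms by (intro mult_right_mono) auto
    have c1: "\<lceil>p * real j\<rceil> \<le> \<lceil>q * real j\<rceil>" by (rule ceiling_mono[OF qj])
    have c0: "0 \<le> \<lceil>p * real j\<rceil>" using pj by simp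
    have c2: "0 \<le> \<lceil>q * real j\<rceil>" using c0 c1 by linarith
    have n: "nat \<lceil>p * real j\<rceil> \<le> nat \<lceil>q * real j\<rceil>" using c1 by (rule nat_mono)
    show ?thesis unfolding card_Win of_nat_diff[OF n]
      using c0 c2 by (simp only: of_nat_nat)
  qed
  have b: "\<bar>real (card (Win p q (real j))) / real j - (q - p)\<bar> \<le> 1 / real j" if "j \<ge> 1" for j
  proof -
    have a1: "q * real j \<le> real_of_int \<lceil>q * real j\<rceil>" "real_of_int \<lceil>q * real j\<rceil> < q * real j + 1"
      using ceiling_correct[of "q * real j"] by linarith+
    have a2: "p * real j \<le> real_of_int \<lceil>p * real j\<rceil>" "real_of_int \<lceil>p * real j\<rceil> < p * real j + 1"
      using ceiling_correct[of "p * real j"] by linarith+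
    have "\<bar>real (card (Win p q (real j))) - (q - p) * real j\<bar> \<le> 1"
      unfolding eq left_diff_distrib using a1 a2 by (smt (verit))
    then have "\<bar>real (card (Win p q (real j))) - (q - p) * real j\<bar> / real j \<le> 1 / real j"
      using that by (intro divide_right_mono) auto
    moreover have "\<bar>real (card (Win p q (real j))) - (q - p) * real j\<bar> / real j
        = \<bar>real (card (Win p q (real j))) / real j - (q - p)\<bar>"
      using that by (simp add: field_simps)
    ultimately show ?thesis by simp
  qed
  show ?thesis
  proof (rule LIMSEQ_I)
    fix r :: real assume r: "r > 0"
    obtain N :: nat where N0: "1 / r < real N" using reals_Archimedean2 by blast
    have Npos: "0 < real N" using N0 r by (smt (verit) divide_pos_pos)
    have N: "N \<ge> 1" "1 / real N < r"
      using Npos N0 r by (auto simp: field_simps)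
    show "\<exists>no. \<forall>n\<ge>no. norm (real (card (Win p q (real n))) / real n - (q - p)) < r"
    proof (intro exI allI impI)
      fix n assume n: "n \<ge> N"
      have "1 / real n \<le> 1 / real N" using n N by (intro divide_left_mono) auto
      then show "norm (real (card (Win p q (real n))) / real n - (q - p)) < r"
        using b[of n] n N by simp
    qed
  qed
qed


context lap begin

lemma spaceM[simp]: "space M = UNIV"
  using sets_eq_imp_space_eq[OF sets_M] by simp

lemma sets_M'[simp]: "A \<in> sets borel \<Longrightarrow> A \<in> sets M"
  using sets_M by simp

lemma fin_below: "emeasure M {..b} < \<infinity>"
proof -
  define C where "C = c + 1"
  have C: "C > c" "C > 0" using c0 by (auto simp: C_def)
  have "integrable M (indicator {..b} :: real \<Rightarrow> real)"
  proof (rule Bochner_Integration.integrable_bound[where f="\<lambda>t. exp (C * b) * exp (- C * t)"])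
    show "integrable M (\<lambda>t. exp (C * b) * exp (- C * t))" using intexp[OF C(1)] by simp
    show "(indicator {..b} :: real \<Rightarrow> real) \<in> borel_measurable M" unfolding bM by measurable
    show "AE t in M. norm (indicator {..b} t :: real) \<le> norm (exp (C * b) * exp (- C * t))"
    proof (rule AE_I2)
      fix t :: real
      show "norm (indicator {..b} t :: real) \<le> norm (exp (C * b) * exp (- C * t))"
      proof (cases "t \<le> b")
        case True
        then have "C * t \<le> C * b" using C by (intro mult_left_mono) auto
        then have "1 \<le> exp (C * b - C * t)" by simp
        then show ?thesis using True by (simp add: exp_diff exp_minus field_simps)
      qed simp
    qed
  qed
  then show ?thesis by (simp add: integrable_indicator_iff)
qed

lemma fin_bounded: "A \<subseteq> {..b} \<Longrightarrow> emeasure M A < \<infinity>"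
  using fin_below[of b] emeasure_mono[of A "{..b}" M] by (auto simp: sets_M)

lemma dom_lim:
  fixes F :: "nat \<Rightarrow> real \<Rightarrow> real" and C K :: real
  assumes [measurable]: "\<And>j. F j \<in> borel_measurable borel" "f \<in> borel_measurable borel"
    and lim: "AE t in M. (\<lambda>j. F j t) \<longlonglongrightarrow> f t"
    and w: "integrable M w"
    and bnd: "\<And>j. real j \<ge> K \<Longrightarrow> AE t in M. norm (F j t) \<le> w t"
  shows "(\<lambda>j. \<integral>t. F j t \<partial>M) \<longlonglongrightarrow> (\<integral>t. f t \<partial>M)"
proof -
  define N where "N = nat \<lceil>K\<rceil>"
  have N: "real (j + N) \<ge> K" for j unfolding N_def by linarith
  have "(\<lambda>j. \<integral>t. F (j + N) t \<partial>M) \<longlonglongrightarrow> (\<integral>t. f t \<partial>M)"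
  proof (rule integral_dominated_convergence[OF _ _ w])
    show "f \<in> borel_measurable M" "\<And>j. F (j + N) \<in> borel_measurable M" unfolding bM by measurable
    show "AE t in M. (\<lambda>j. F (j + N) t) \<longlonglongrightarrow> f t"
      using lim by eventually_elim (rule LIMSEQ_ignore_initial_segment)
    show "AE t in M. norm (F (j + N) t) \<le> w t" for j using bnd[OF N[of j]] .
  qed
  then show ?thesis by (rule LIMSEQ_offset)
qed

definition CC where "CC = c + 1"

lemma CC: "CC > c" "CC > 0" using c0 by (auto simp: CC_def)

lemma Wf_meas[measurable]: "Wf p q l \<in> borel_measurable borel"
  unfolding Wf_def poi_def by measurable

lemma Wf_dom:
  assumes "0 \<le> q" "real j \<ge> 4 * CC" and that: "\<And>t. \<bar>g t\<bar> \<le> 1"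
  shows "AE t in M. norm (Wf p q (real j) t * g t) \<le> exp (4 * q * CC) * exp (- CC * t)"
  using AE_nonneg
proof eventually_elim
  case (elim t)
  have "\<bar>Wf p q (real j) t\<bar> * \<bar>g t\<bar> \<le> \<bar>Wf p q (real j) t\<bar> * 1"
    by (intro mult_left_mono that) simp
  also have "\<dots> = Wf p q (real j) t" using Wf_nonneg[of "real j" t p q] elim by simp
  also have "\<dots> \<le> exp (4 * q * CC) * exp (- CC * t)"
    by (rule Wf_bound) (use assms elim CC in auto)
  finally show ?case by (simp add: abs_mult)
qed

lemma intw: "integrable M (\<lambda>t. exp (4 * q * CC) * exp (- CC * t))"
  using intexp[OF CC(1)] by simp

lemma lim_in:
  assumes "0 \<le> p" "p < q"
  shows "(\<lambda>j. \<integral>t. Wf p q (real j) t * indicator {p<..<q} t \<partial>M) \<longlonglongrightarrow> measure M {p<..<q}"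
proof -
  have "(\<lambda>j. \<integral>t. Wf p q (real j) t * indicator {p<..<q} t \<partial>M) \<longlonglongrightarrow> (\<integral>t. indicator {p<..<q} t \<partial>M)"
  proof (rule dom_lim[OF _ _ _ intw])
    show "AE t in M. (\<lambda>j. Wf p q (real j) t * indicator {p<..<q} t) \<longlonglongrightarrow> indicator {p<..<q} t"
    proof (rule AE_I2)
      fix t
      show "(\<lambda>j. Wf p q (real j) t * indicator {p<..<q} t) \<longlonglongrightarrow> indicator {p<..<q} t"
      proof (cases "t \<in> {p<..<q}")
        case True
        then show ?thesis using Wf_in[OF assms(1), of t q] by simp
      qed simp
    qed
    show "AE t in M. norm (Wf p q (real j) t * indicator {p<..<q} t) \<le> exp (4 * q * CC) * exp (- CC * t)"
      if "real j \<ge> 4 * CC" for j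
      by (rule Wf_dom) (use assms that in \<open>auto simp: indicator_def\<close>)
  qed measurable
  then show ?thesis by simp
qed

lemma lim_out:
  assumes "0 \<le> p" "p < q"
  shows "(\<lambda>j. \<integral>t. Wf p q (real j) t * indicator (- {p..q}) t \<partial>M) \<longlonglongrightarrow> 0"
proof -
  have "(\<lambda>j. \<integral>t. Wf p q (real j) t * indicator (- {p..q}) t \<partial>M) \<longlonglongrightarrow> (\<integral>t. 0 \<partial>M)"
  proof (rule dom_lim[OF _ _ _ intw])
    show "AE t in M. (\<lambda>j. Wf p q (real j) t * indicator (- {p..q}) t) \<longlonglongrightarrow> 0"
      using AE_nonneg
    proof eventually_elim
      case (elim t)
      show ?case
      proof (cases "t \<in> {p..q}")
        case False
        then have "t < p \<or> q < t" by auto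
        then show ?thesis using Wf_out[OF assms(1) _ elim, of q] assms False by simp
      qed simp
    qed
    show "AE t in M. norm (Wf p q (real j) t * indicator (- {p..q}) t) \<le> exp (4 * q * CC) * exp (- CC * t)"
      if "real j \<ge> 4 * CC" for j
      by (rule Wf_dom) (use assms that in \<open>auto simp: indicator_def\<close>)
  qed measurable
  then show ?thesis by simp
qed

lemma int_Wf_ind:
  assumes "0 \<le> q" "real j \<ge> 4 * CC" "\<And>t. \<bar>g t\<bar> \<le> 1" "g \<in> borel_measurable borel"
  shows "integrable M (\<lambda>t. Wf p q (real j) t * g t)"
  by (rule Bochner_Integration.integrable_bound[OF intw]) (use assms Wf_dom[OF assms(1,2), of g p] in \<open>auto simp: bM\<close>)

lemma int_Wf:
  assumes "0 \<le> q" "real j \<ge> 4 * CC"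
  shows "integrable M (Wf p q (real j))"
  using int_Wf_ind[OF assms, of "\<lambda>_. 1"] by simp

lemma window_bounds:
  assumes "0 \<le> p" "p < q" and l: "(\<lambda>j. \<integral>t. Wf p q (real j) t \<partial>M) \<longlonglongrightarrow> lv"
  shows "measure M {p<..<q} \<le> lv" "lv \<le> measure M {p..q}"
proof -
  have q0: "0 \<le> q" using assms by simp
  show "measure M {p<..<q} \<le> lv"
  proof (rule LIMSEQ_le[OF lim_in[OF assms(1,2)] l])
    show "\<exists>N. \<forall>j\<ge>N. (\<integral>t. Wf p q (real j) t * indicator {p<..<q} t \<partial>M) \<le> (\<integral>t. Wf p q (real j) t \<partial>M)"
    proof (intro exI allI impI)
      fix j :: nat assume j: "j \<ge> nat \<lceil>4 * CC\<rceil>"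
      then have j': "real j \<ge> 4 * CC" by linarith
      show "(\<integral>t. Wf p q (real j) t * indicator {p<..<q} t \<partial>M) \<le> (\<integral>t. Wf p q (real j) t \<partial>M)"
      proof (rule integral_mono_AE)
        show "integrable M (\<lambda>t. Wf p q (real j) t * indicator {p<..<q} t)"
          by (rule int_Wf_ind[OF q0 j']) (auto simp: indicator_def)
        show "integrable M (Wf p q (real j))" by (rule int_Wf[OF q0 j'])
        show "AE t in M. Wf p q (real j) t * indicator {p<..<q} t \<le> Wf p q (real j) t"
          using AE_nonneg by eventually_elim (use Wf_nonneg[of "real j"] in \<open>auto simp: indicator_def\<close>)
      qed
    qed
  qed
  have fin: "emeasure M {p..q} < \<infinity>" by (rule fin_bounded[of _ q]) auto
  have lim2: "(\<lambda>j. measure M {p..q} + (\<integral>t. Wf p q (real j) t * indicator (- {p..q}) t \<partial>M)) \<longlonglongrightarrow> measure M {p..q} + 0"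
    by (intro tendsto_add tendsto_const lim_out[OF assms(1,2)])
  have "lv \<le> measure M {p..q} + 0"
  proof (rule LIMSEQ_le[OF l lim2])
    show "\<exists>N. \<forall>j\<ge>N. (\<integral>t. Wf p q (real j) t \<partial>M) \<le> measure M {p..q} + (\<integral>t. Wf p q (real j) t * indicator (- {p..q}) t \<partial>M)"
    proof (intro exI allI impI)
      fix j :: nat assume j: "j \<ge> nat \<lceil>4 * CC\<rceil>"
      then have j': "real j \<ge> 4 * CC" by linarith
      have i1: "integrable M (\<lambda>t. indicator {p..q} t :: real)"
        using fin by (simp add: integrable_indicator_iff)
      have i2: "integrable M (\<lambda>t. Wf p q (real j) t * indicator (- {p..q}) t)"
        by (rule int_Wf_ind[OF q0 j']) (auto simp: indicator_def)
      have "(\<integral>t. Wf p q (real j) t \<partial>M) \<le> (\<integral>t. indicator {p..q} t + Wf p q (real j) t * indicator (- {p..q}) t \<partial>M)"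
      proof (rule integral_mono_AE[OF int_Wf[OF q0 j'] Bochner_Integration.integrable_add[OF i1 i2]])
        show "AE t in M. Wf p q (real j) t \<le> indicator {p..q} t + Wf p q (real j) t * indicator (- {p..q}) t"
          using AE_nonneg by eventually_elim (use Wf_le1[of "real j"] in \<open>auto simp: indicator_def\<close>)
      qed
      also have "\<dots> = measure M {p..q} + (\<integral>t. Wf p q (real j) t * indicator (- {p..q}) t \<partial>M)"
        using i1 i2 by simp
      finally show "(\<integral>t. Wf p q (real j) t \<partial>M) \<le> measure M {p..q} + (\<integral>t. Wf p q (real j) t * indicator (- {p..q}) t \<partial>M)" .
    qed
  qed
  then show "lv \<le> measure M {p..q}" by simp
qed

lemma window_lim_null:
  assumes "0 \<le> p" "p < q" "emeasure M {p} = 0" "emeasure M {q} = 0"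
  shows "(\<lambda>j. \<integral>t. Wf p q (real j) t \<partial>M) \<longlonglongrightarrow> measure M {p<..<q}"
proof -
  have ae: "AE t in M. t \<noteq> p \<and> t \<noteq> q"
  proof (rule AE_I')
    have "{p} \<in> null_sets M" "{q} \<in> null_sets M" using assms(3,4) by (auto simp: null_sets_def)
    then have "{p} \<union> {q} \<in> null_sets M" by (rule null_sets.Un)
    then show "{p, q} \<in> null_sets M" by (metis insert_is_Un Un_commute)
  qed auto
  have "(\<lambda>j. \<integral>t. Wf p q (real j) t \<partial>M) \<longlonglongrightarrow> (\<integral>t. indicator {p<..<q} t \<partial>M)"
  proof (rule dom_lim[OF _ _ _ intw])
    show "AE t in M. (\<lambda>j. Wf p q (real j) t) \<longlonglongrightarrow> indicator {p<..<q} t"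
      using AE_nonneg ae
    proof eventually_elim
      case (elim t)
      show ?case
      proof (cases "t \<in> {p<..<q}")
        case True
        then show ?thesis using Wf_in[OF assms(1), of t q] by simp
      next
        case False
        then have "t < p \<or> q < t" using elim by auto
        then show ?thesis using Wf_out[OF assms(1) _ elim(1), of q] assms False by simp
      qed
    qed
    show "AE t in M. norm (Wf p q (real j) t) \<le> exp (4 * q * CC) * exp (- CC * t)"
      if "real j \<ge> 4 * CC" for j
      using Wf_dom[of q j "\<lambda>_. 1" p] assms that by (simp only: mult_1_right)
  qed measurable
  then show ?thesis by simp
qed

lemma lap_inf: "(\<lambda>j. \<integral>t. exp (- real j * t) \<partial>M) \<longlonglongrightarrow> measure M {0}"
proof -
  have "(\<lambda>j. \<integral>t. exp (- real j * t) \<partial>M) \<longlonglongrightarrow> (\<integral>t. indicator {0} t \<partial>M)"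
  proof (rule dom_lim[OF _ _ _ intexp[OF CC(1)], where K=CC])
    show "AE t in M. (\<lambda>j. exp (- real j * t)) \<longlonglongrightarrow> indicator {0} t"
      using AE_nonneg
    proof eventually_elim
      case (elim t)
      show ?case
      proof (cases "t = 0")
        case False
        then have "t > 0" using elim by simp
        then have "(\<lambda>j. exp (- t) ^ j) \<longlonglongrightarrow> 0" by (intro LIMSEQ_power_zero) auto
        moreover have "exp (- t) ^ j = exp (- real j * t)" for j
          by (simp add: exp_of_nat_mult[symmetric] mult.commute)
        ultimately show ?thesis using False by simp
      qed simp
    qed
    show "AE t in M. norm (exp (- real j * t)) \<le> exp (- CC * t)" if "real j \<ge> CC" for j
      using AE_nonneg by eventually_elim (use that in \<open>auto intro: mult_right_mono\<close>)
  qed measurable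
  then show ?thesis by simp
qed

end


locale conc =
  fixes D :: "real \<Rightarrow> real \<Rightarrow> real"
  assumes D_nonneg: "\<And>a b. 0 < a \<Longrightarrow> a < b \<Longrightarrow> 0 \<le> D a b"
    and D_add: "\<And>a b c. 0 < a \<Longrightarrow> a < b \<Longrightarrow> b < c \<Longrightarrow> D a c = D a b + D b c"
    and D_conc: "\<And>x y z. 0 < x \<Longrightarrow> x < y \<Longrightarrow> y < z \<Longrightarrow> (y - x) * D y z \<le> (z - y) * D x y"
begin

definition sl :: "real \<Rightarrow> real \<Rightarrow> real" where "sl a b = D a b / (b - a)"

definition dt :: "real \<Rightarrow> real" where "dt t = Inf ((\<lambda>s. sl s t) ` {0<..<t})"

lemma sl3: "0 < x \<Longrightarrow> x < y \<Longrightarrow> y < z \<Longrightarrow> sl y z \<le> sl x y"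
  using D_conc[of x y z] by (simp add: sl_def field_simps)

lemma sl_nonneg: "0 < a \<Longrightarrow> a < b \<Longrightarrow> 0 \<le> sl a b"
  using D_nonneg[of a b] by (simp add: sl_def)

lemma bdd: "0 < t \<Longrightarrow> bdd_below ((\<lambda>s. sl s t) ` {0<..<t})"
  by (rule bdd_belowI[where m=0]) (auto intro: sl_nonneg)

lemma dt_le: "0 < s \<Longrightarrow> s < t \<Longrightarrow> dt t \<le> sl s t"
  unfolding dt_def by (rule cInf_lower) (auto intro: bdd)

lemma sl_le_dt: "0 < s \<Longrightarrow> s < t \<Longrightarrow> sl s t \<le> dt s"
  unfolding dt_def by (rule cInf_greatest) (auto intro: sl3)

lemma dt_nonneg: "0 < t \<Longrightarrow> 0 \<le> dt t"
  unfolding dt_def by (rule cInf_greatest) (auto intro: sl_nonneg)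

lemma dt_anti: "0 < s \<Longrightarrow> s \<le> t \<Longrightarrow> dt t \<le> dt s"
  using dt_le[of s t] sl_le_dt[of s t] by (cases "s = t") auto

definition phi :: "real \<Rightarrow> real" where "phi t = indicator {0<..} t * dt t"

lemma phi_meas[measurable]: "phi \<in> borel_measurable borel"
proof -
  have "(\<lambda>t. - phi t) \<in> borel_measurable borel"
  proof (rule borel_measurable_piecewise_mono[where C="{{..0}, {0<..}}"])
    fix c :: "real set" assume "c \<in> {{..0}, {0<..}}"
    then show "mono_on c (\<lambda>t. - phi t)" by (auto simp: mono_on_def phi_def intro: dt_anti)
  qed auto
  then have "(\<lambda>t. - (- phi t)) \<in> borel_measurable borel" by measurable
  then show ?thesis by simp
qed

definition M3 where "M3 = density lborel (\<lambda>t. ennreal (phi t))"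

lemma sets_M3[simp]: "sets M3 = sets borel" by (simp add: M3_def)

lemma M3_piece:
  assumes "0 < a" "0 < h"
  shows "emeasure M3 {a<..a+h} \<le> ennreal (h * dt a)" "ennreal (h * dt (a + h)) \<le> emeasure M3 {a<..a+h}"
proof -
  have e: "emeasure M3 {a<..a+h} = (\<integral>\<^sup>+t. ennreal (phi t) * indicator {a<..a+h} t \<partial>lborel)"
    unfolding M3_def by (rule emeasure_density) auto
  have "(\<integral>\<^sup>+t. ennreal (phi t) * indicator {a<..a+h} t \<partial>lborel) \<le> (\<integral>\<^sup>+t. ennreal (dt a) * indicator {a<..a+h} t \<partial>lborel)"
  proof (rule nn_integral_mono)
    fix t show "ennreal (phi t) * indicator {a<..a+h} t \<le> ennreal (dt a) * indicator {a<..a+h} t"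
      using assms dt_anti[of a t] by (auto simp: phi_def indicator_def intro: ennreal_leI)
  qed
  also have "\<dots> = ennreal (dt a) * ennreal h"
    using assms by (subst nn_integral_cmult_indicator) auto
  also have "\<dots> = ennreal (h * dt a)"
    using assms dt_nonneg[of a] by (simp add: ennreal_mult[symmetric] mult.commute)
  finally show "emeasure M3 {a<..a+h} \<le> ennreal (h * dt a)" unfolding e .
  have "ennreal (h * dt (a + h)) = ennreal (dt (a+h)) * ennreal h"
    using assms dt_nonneg[of "a+h"] by (simp add: ennreal_mult[symmetric] mult.commute)
  also have "\<dots> = (\<integral>\<^sup>+t. ennreal (dt (a+h)) * indicator {a<..a+h} t \<partial>lborel)"
    using assms by (subst nn_integral_cmult_indicator) auto
  also have "\<dots> \<le> (\<integral>\<^sup>+t. ennreal (phi t) * indicator {a<..a+h} t \<partial>lborel)"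
  proof (rule nn_integral_mono)
    fix t show "ennreal (dt (a+h)) * indicator {a<..a+h} t \<le> ennreal (phi t) * indicator {a<..a+h} t"
      using assms dt_anti[of t "a+h"] by (auto simp: phi_def indicator_def intro: ennreal_leI)
  qed
  finally show "ennreal (h * dt (a + h)) \<le> emeasure M3 {a<..a+h}" unfolding e .
qed

lemma M3_fin: "0 < a \<Longrightarrow> 0 < h \<Longrightarrow> emeasure M3 {a<..a+h} \<noteq> top"
  using M3_piece(1)[of a h] by (auto simp: top_unique)

lemma M3_piece_real:
  assumes "0 < a" "0 < h"
  shows "measure M3 {a<..a+h} \<le> h * dt a" "h * dt (a + h) \<le> measure M3 {a<..a+h}"
proof -
  have e: "emeasure M3 {a<..a+h} = ennreal (measure M3 {a<..a+h})"
    using M3_fin[OF assms] by (rule emeasure_eq_ennreal_measure)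
  have n: "0 \<le> h * dt a" "0 \<le> h * dt (a + h)" using assms dt_nonneg[of a] dt_nonneg[of "a+h"] by auto
  show "measure M3 {a<..a+h} \<le> h * dt a"
    using M3_piece(1)[OF assms] n unfolding e by (simp add: ennreal_le_iff)
  show "h * dt (a + h) \<le> measure M3 {a<..a+h}"
    using M3_piece(2)[OF assms] n unfolding e by (simp add: ennreal_le_iff)
qed

lemma M3_add:
  assumes "a \<le> b" "b \<le> c" "emeasure M3 {a<..b} \<noteq> top" "emeasure M3 {b<..c} \<noteq> top"
  shows "measure M3 {a<..c} = measure M3 {a<..b} + measure M3 {b<..c}"
    "emeasure M3 {a<..c} \<noteq> top"
proof -
  have u: "{a<..c} = {a<..b} \<union> {b<..c}" using assms by auto
  have em: "emeasure M3 {a<..c} = emeasure M3 {a<..b} + emeasure M3 {b<..c}"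
    unfolding u by (rule plus_emeasure[symmetric]) auto
  then show "emeasure M3 {a<..c} \<noteq> top" using assms by (simp add: ennreal_add_eq_top)
  show "measure M3 {a<..c} = measure M3 {a<..b} + measure M3 {b<..c}"
    unfolding u by (rule measure_Union) (use assms in \<open>auto simp: less_top\<close>)
qed

lemma tele:
  assumes "0 < x" "0 < h"
  shows "emeasure M3 {x<..x + real (Suc i) * h} \<noteq> top \<and>
    \<bar>measure M3 {x<..x + real (Suc i) * h} - D x (x + real (Suc i) * h)\<bar> \<le> h * (dt x - dt (x + real (Suc i) * h))"
proof (induction i)
  case 0
  have p: "measure M3 {x<..x+h} \<le> h * dt x" "h * dt (x + h) \<le> measure M3 {x<..x+h}"
    using M3_piece_real[OF assms] by auto
  have "D x (x + h) = h * sl x (x + h)" using assms by (simp add: sl_def)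
  moreover have "sl x (x+h) \<le> dt x" "dt (x + h) \<le> sl x (x+h)"
    using assms by (auto intro: sl_le_dt dt_le)
  ultimately have "h * dt (x + h) \<le> D x (x + h)" "D x (x + h) \<le> h * dt x"
    using assms by (auto intro: mult_left_mono)
  then show ?case using p M3_fin[OF assms] by (simp add: abs_le_iff algebra_simps)
next
  case (Suc i)
  define a where "a = x + real (Suc i) * h"
  have "real (Suc i) * h > 0" using assms by (intro mult_pos_pos) auto
  then have a: "a > x" "a + h = x + real (Suc (Suc i)) * h" by (auto simp: a_def algebra_simps)
  have a0: "a > 0" using a assms by simp
  have IH: "emeasure M3 {x<..a} \<noteq> top" "\<bar>measure M3 {x<..a} - D x a\<bar> \<le> h * (dt x - dt a)"
    using Suc.IH unfolding a_def by auto
  have p: "measure M3 {a<..a+h} \<le> h * dt a" "h * dt (a + h) \<le> measure M3 {a<..a+h}"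
    using M3_piece_real[OF a0 assms(2)] by auto
  have "D a (a + h) = h * sl a (a + h)" using assms by (simp add: sl_def)
  moreover have "sl a (a+h) \<le> dt a" "dt (a + h) \<le> sl a (a+h)"
    using assms a0 by (auto intro: sl_le_dt dt_le)
  ultimately have q: "h * dt (a + h) \<le> D a (a + h)" "D a (a + h) \<le> h * dt a"
    using assms by (auto intro: mult_left_mono)
  have add: "measure M3 {x<..a+h} = measure M3 {x<..a} + measure M3 {a<..a+h}"
     "emeasure M3 {x<..a+h} \<noteq> top"
    using M3_add[of x a "a+h"] a assms IH(1) M3_fin[OF a0 assms(2)] by auto
  have Dadd: "D x (a + h) = D x a + D a (a + h)" using D_add[of x a "a+h"] a assms by simp
  have "\<bar>measure M3 {x<..a+h} - D x (a+h)\<bar> \<le> h * (dt x - dt (a + h))"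
    using IH(2) p q unfolding add Dadd by (simp add: abs_le_iff algebra_simps)
  then show ?case using add(2) unfolding a(2) by simp
qed

lemma M3_eq_D:
  assumes "0 < a" "a < b"
  shows "emeasure M3 {a<..b} = ennreal (D a b)"
proof -
  have bound: "\<bar>measure M3 {a<..b} - D a b\<bar> \<le> (b - a) * dt a / real (Suc m)" for m
  proof -
    define h where "h = (b - a) / real (Suc m)"
    have h: "h > 0" using assms by (simp add: h_def)
    have e: "a + real (Suc m) * h = b" unfolding h_def by simp
    have "\<bar>measure M3 {a<..b} - D a b\<bar> \<le> h * (dt a - dt b)"
      using tele[OF assms(1) h, of m] unfolding e by simp
    also have "\<dots> \<le> h * dt a" using h dt_nonneg[of b] assms by (intro mult_left_mono) auto
    finally show ?thesis by (simp add: h_def)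
  qed
  have "(\<lambda>m. (b - a) * dt a / real (Suc m)) \<longlonglongrightarrow> 0"
    using lim_const_over_n[of "(b - a) * dt a"] by (rule LIMSEQ_Suc)
  then have "\<bar>measure M3 {a<..b} - D a b\<bar> \<le> 0"
    using bound by (intro LIMSEQ_le_const) auto
  then have m: "measure M3 {a<..b} = D a b" by simp
  have "emeasure M3 {a<..b} \<noteq> top"
  proof -
    have "b = a + real (Suc 0) * (b - a)" by simp
    then show ?thesis using tele[of a "b - a" 0] assms by (metis diff_gt_0_iff_gt)
  qed
  then show ?thesis using m emeasure_eq_ennreal_measure by metis
qed

end


lemma meas_eq_pos:
  fixes M N :: "real measure"
  assumes sM: "sets M = sets borel" and sN: "sets N = sets borel"
    and M0: "emeasure M {..0} = 0" and N0: "emeasure N {..0} = 0"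
    and fin: "\<And>b. emeasure M {..b} \<noteq> top"
    and eq: "\<And>a b. 0 < a \<Longrightarrow> a < b \<Longrightarrow> emeasure M {a<..b} = emeasure N {a<..b}"
  shows "M = N"
proof (rule measure_eqI_generator_eq[where E="range (\<lambda>(a, b). {a<..b})" and \<Omega>=UNIV
      and A="\<lambda>i. {- real i<..real i}"])
  show "Int_stable (range (\<lambda>(a, b). {a<..b::real}))"
  proof (rule Int_stableI)
    fix X Y assume "X \<in> range (\<lambda>(a, b). {a<..b::real})" "Y \<in> range (\<lambda>(a, b). {a<..b::real})"
    then obtain a b c d where "X = {a<..b}" "Y = {c<..d}" by auto
    then have "X \<inter> Y = {max a c<..min b d}" by auto
    then show "X \<inter> Y \<in> range (\<lambda>(a, b). {a<..b::real})" by auto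
  qed
  show "range (\<lambda>(a, b). {a<..b}) \<subseteq> Pow UNIV" by auto
  show "sets M = sigma_sets UNIV (range (\<lambda>(a, b). {a<..b}))"
    unfolding sM borel_sigma_sets_Ioc by auto
  show "sets N = sigma_sets UNIV (range (\<lambda>(a, b). {a<..b}))"
    unfolding sN borel_sigma_sets_Ioc by auto
  show "range (\<lambda>i. {- real i<..real i}) \<subseteq> range (\<lambda>(a, b). {a<..b})" by auto
  show "(\<Union>i. {- real i<..real i}) = UNIV"
  proof -
    have "x \<in> (\<Union>i. {- real i<..real i})" for x :: real
    proof -
      obtain n :: nat where "\<bar>x\<bar> < real n" using reals_Archimedean2 by blast
      then have "x \<in> {- real n<..real n}" by auto
      then show ?thesis by blast
    qed
    then show ?thesis by auto
  qed
  show "emeasure M {- real i<..real i} \<noteq> \<infinity>" for i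
  proof -
    have "emeasure M {- real i<..real i} \<le> emeasure M {..real i}"
      by (rule emeasure_mono) (auto simp: sM)
    then show ?thesis using fin[of "real i"] by (auto simp: top_unique)
  qed
  fix X assume "X \<in> range (\<lambda>(a, b). {a<..b::real})"
  then obtain a b where X: "X = {a<..b}" by auto
  have null: "emeasure K (Y \<inter> {..0}) = 0" if "sets K = sets borel" "emeasure K {..0} = 0" "Y \<in> sets borel" for K :: "real measure" and Y
  proof -
    have s: "{..0::real} \<in> sets K" using that(1) by simp
    have "emeasure K (Y \<inter> {..0}) \<le> emeasure K {..0}"
      by (rule emeasure_mono[OF Int_lower2 s])
    then show ?thesis using that(2) by (simp only: le_zero_eq)
  qed
  have pos: "emeasure M {a'<..b} = emeasure N {a'<..b}" if "0 \<le> a'" for a'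
  proof (cases "a' < b")
    case True
    show ?thesis
    proof (cases "a' = 0")
      case False then show ?thesis using eq[of a' b] True that by simp
    next
      case z: True
      define A where "A k = {b / real (Suc (Suc k))<..b}" for k
      have inc: "incseq A"
      proof (rule monoI)
        fix x y :: nat assume xy: "x \<le> y"
        have "b / real (Suc (Suc y)) \<le> b / real (Suc (Suc x))"
          using True z xy by (intro divide_left_mono) auto
        then show "A x \<le> A y" unfolding A_def by auto
      qed
      have un: "(\<Union>k. A k) = {0<..b}"
      proof
        show "(\<Union>k. A k) \<subseteq> {0<..b}"
        proof
          fix x assume "x \<in> (\<Union>k. A k)"
          then obtain k where "b / real (Suc (Suc k)) < x" "x \<le> b" by (auto simp: A_def)
          moreover have "0 < b / real (Suc (Suc k))" using True z by simp
          ultimately show "x \<in> {0<..b}" by simp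
        qed
        show "{0<..b} \<subseteq> (\<Union>k. A k)"
        proof
          fix x assume x: "x \<in> {0<..b}"
          obtain n :: nat where n: "b / x < real n" using reals_Archimedean2 by blast
          have "b / real (Suc (Suc n)) < x"
            using x n True z by (auto simp: field_simps)
          then show "x \<in> (\<Union>k. A k)" using x by (auto simp: A_def)
        qed
      qed
      have "emeasure M (A k) = emeasure N (A k)" for k
      proof -
        have "0 < b / real (Suc (Suc k))" using True z by simp
        moreover have "b * 1 < b * real (Suc (Suc k))" using True z by (intro mult_strict_left_mono) auto
        then have "b / real (Suc (Suc k)) < b" by (simp add: divide_less_eq)
        ultimately show ?thesis unfolding A_def by (intro eq)
      qed
      then have supeq: "(SUP k. emeasure M (A k)) = (SUP k. emeasure N (A k))" by simp
      have r: "range A \<subseteq> sets M" "range A \<subseteq> sets N"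
        unfolding sM sN A_def by auto
      have "emeasure M (\<Union>k. A k) = emeasure N (\<Union>k. A k)"
        using supeq unfolding SUP_emeasure_incseq[OF r(1) inc, symmetric] SUP_emeasure_incseq[OF r(2) inc, symmetric] .
      then show ?thesis unfolding un z .
    qed
  next
    case False
    then have "{a'<..b} = {}" by auto
    then show ?thesis by simp
  qed
  show "emeasure M X = emeasure N X"
  proof (cases "0 \<le> a")
    case True then show ?thesis using pos X by simp
  next
    case False
    have u: "{a<..b} = ({a<..b} \<inter> {..0}) \<union> {0<..b}" using False by auto
    have sp: "emeasure K {a<..b} = emeasure K ({a<..b} \<inter> {..0}) + emeasure K {0<..b}"
      if "sets K = sets borel" for K :: "real measure"
      by (subst u, rule plus_emeasure[symmetric]) (use that in auto)
    have "emeasure M {a<..b} = emeasure N {a<..b}"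
      unfolding sp[OF sM] sp[OF sN] null[OF sM M0, of "{a<..b}", simplified] null[OF sN N0, of "{a<..b}", simplified]
      using pos[of 0] by simp
    then show ?thesis using X by simp
  qed
qed


lemma funpow_deriv_cong:
  assumes "open S" "\<And>x. x \<in> S \<Longrightarrow> f x = g x" "x \<in> S"
  shows "(deriv ^^ n) f x = (deriv ^^ n) g x"
  using assms(3)
proof (induction n arbitrary: x)
  case (Suc n)
  have "eventually (\<lambda>y. y \<in> S) (nhds x)" using assms(1) Suc.prems by (rule eventually_nhds_in_open)
  then have "eventually (\<lambda>y. (deriv ^^ n) f y = (deriv ^^ n) g y) (nhds x)"
    by eventually_elim (rule Suc.IH)
  then show ?case by (simp add: deriv_cong_ev)
qed (use assms in simp)

context lap begin

lemma deriv_Lk: "s > c \<Longrightarrow> (deriv ^^ n) (Lk 0) s = Lk n s"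
proof (induction n arbitrary: s)
  case 0 then show ?case by simp
next
  case (Suc n)
  have "eventually (\<lambda>y. y \<in> {c<..}) (nhds s)" using Suc.prems by (intro eventually_nhds_in_open) auto
  then have "eventually (\<lambda>y. (deriv ^^ n) (Lk 0) y = Lk n y) (nhds s)"
    by eventually_elim (use Suc.IH in auto)
  then have "deriv ((deriv ^^ n) (Lk 0)) s = deriv (Lk n) s" by (rule deriv_cong_ev) simp
  also have "\<dots> = Lk (Suc n) s" by (rule DERIV_imp_deriv[OF Lk_deriv[OF Suc.prems]])
  finally show ?case by simp
qed

lemma Lk0: "Lk 0 s = (\<integral>t. exp (- s * t) \<partial>M)"
  by (simp add: Lk_def)

lemma poi_eq: "poi n (l * t) = (- l) ^ n / fact n * ((- t) ^ n * exp (- l * t))"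
proof -
  have "(- l) ^ n * (- t) ^ n = (l * t) ^ n" by (simp add: power_mult_distrib[symmetric])
  then show ?thesis unfolding poi_def by (simp add: field_simps)
qed

lemma integral_Wf:
  assumes "l > c"
  shows "(\<integral>t. Wf p q l t \<partial>M) = (\<Sum>n\<in>Win p q l. (- l) ^ n / fact n * Lk n l)"
proof -
  have i: "integrable M (\<lambda>t. poi n (l * t))" for n
    unfolding poi_eq by (intro integrable_mult_right int_pow'[OF assms])
  have "(\<integral>t. Wf p q l t \<partial>M) = (\<Sum>n\<in>Win p q l. \<integral>t. poi n (l * t) \<partial>M)"
    unfolding Wf_def by (rule Bochner_Integration.integral_sum) (use i in auto)
  also have "\<dots> = (\<Sum>n\<in>Win p q l. (- l) ^ n / fact n * Lk n l)"
    unfolding poi_eq Lk_def by simp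
  finally show ?thesis .
qed

end


lemma null_density_singleton:
  fixes h :: "real \<Rightarrow> real" and x :: real
  assumes [measurable]: "h \<in> borel_measurable borel"
  shows "emeasure (density lborel (\<lambda>t. ennreal (h t))) {x} = 0"
proof -
  have "emeasure (density lborel (\<lambda>t. ennreal (h t))) {x} = (\<integral>\<^sup>+t. ennreal (h t) * indicator {x} t \<partial>lborel)"
    by (rule emeasure_density) auto
  also have "\<dots> = (\<integral>\<^sup>+t. 0 \<partial>lborel)"
  proof -
    have "AE t in lborel. ennreal (h t) * indicator {x} t = 0"
      using AE_lborel_singleton[of x] by eventually_elim simp
    from nn_integral_cong_AE[OF this] show ?thesis by simp
  qed
  finally show ?thesis by simp
qed

theorem corollary3p3:
  fixes f :: "real \<Rightarrow> real"
  defines "w0 \<equiv> real_of_ereal (omega0 f)"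
  defines "g \<equiv> (\<lambda>s. f_ext f (s + w0))"
  assumes "CM f"
    and "omega0 f > -\<infinity>"
    and "\<exists>\<mu> d. rep_measure g \<mu> \<and> has_density_on_pos \<mu> d \<and> (\<forall>t>0. d t > 0)"
    and "\<exists>s0>0. \<forall>n. \<forall>s>s0.
           (-s) ^ n * (deriv ^^ n) g s / fact n
             \<ge> (-s) ^ (Suc n) * (deriv ^^ (Suc n)) g s / fact (Suc n)"
    and "(g \<longlongrightarrow> 0) at_top"
  shows "\<forall>\<mu>. rep_measure f \<mu> \<longrightarrow>
           (\<exists>\<nu>. has_density_on_pos \<mu> \<nu> \<and> antimono_on {0<..} (\<lambda>t. exp (- w0 * t) * \<nu> t))"
proof (intro allI impI)
  fix \<mu> assume rf: "rep_measure f \<mu>"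
  obtain \<mu>g d where rg: "rep_measure g \<mu>g" and hd: "has_density_on_pos \<mu>g d" and dpos: "\<forall>t>0. d t > 0"
    using assms(5) by blast
  obtain s0 where s0: "s0 > 0" and hyp: "\<And>n s. s > s0 \<Longrightarrow>
      (-s) ^ (Suc n) * (deriv ^^ (Suc n)) g s / fact (Suc n) \<le> (-s) ^ n * (deriv ^^ n) g s / fact n"
    using assms(6) by blast
  have glim: "(g \<longlongrightarrow> 0) at_top" by fact
  have sets_mu: "sets \<mu> = sets borel" and mu_neg: "emeasure \<mu> {..<0} = 0"
    and mu_int: "\<And>s. s > 0 \<Longrightarrow> integrable \<mu> (\<lambda>t. exp (- s * t))"
    and f_lap: "\<And>s. s > 0 \<Longrightarrow> f s = (\<integral>t. exp (- s * t) \<partial>\<mu>)"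
    using rf unfolding rep_measure_def by auto
  have sets_mug: "sets \<mu>g = sets borel" and mug_neg: "emeasure \<mu>g {..<0} = 0"
    and mug_int: "\<And>s. s > 0 \<Longrightarrow> integrable \<mu>g (\<lambda>t. exp (- s * t))"
    and g_lap: "\<And>s. s > 0 \<Longrightarrow> g s = (\<integral>t. exp (- s * t) \<partial>\<mu>g)"
    using rg unfolding rep_measure_def by auto
  have d_meas: "d \<in> borel_measurable borel" and mug_eq: "\<mu>g = density lborel (\<lambda>t. ennreal (indicator {0<..} t * d t))"
    using hd unfolding has_density_on_pos_def by auto

  define M1 where "M1 = density \<mu> (\<lambda>t. ennreal (exp (- w0 * t)))"
  define c1 where "c1 = max 0 (- w0)"
  have bmu: "borel_measurable \<mu> = borel_measurable borel"
    using measurable_cong_sets[OF sets_mu refl] by blast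
  interpret I1: lap M1 c1
  proof
    show "sets M1 = sets borel" by (simp add: M1_def sets_mu)
    show "emeasure M1 {..<0} = 0"
    proof -
      have ae: "AE t in \<mu>. t \<notin> {..<0}"
      proof (rule AE_I')
        show "{..<0} \<in> null_sets \<mu>" using mu_neg by (auto simp: null_sets_def sets_mu)
      qed auto
      have "emeasure M1 {..<0} = (\<integral>\<^sup>+t. ennreal (exp (- w0 * t)) * indicator {..<0} t \<partial>\<mu>)"
        unfolding M1_def by (rule emeasure_density) (auto simp: bmu sets_mu)
      also have "\<dots> = (\<integral>\<^sup>+t. 0 \<partial>\<mu>)"
      proof -
        have "AE t in \<mu>. ennreal (exp (- w0 * t)) * indicator {..<0} t = 0"
          using ae by eventually_elim simp
        from nn_integral_cong_AE[OF this] show ?thesis by simp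
      qed
      finally show ?thesis by simp
    qed
    show "0 \<le> c1" by (simp add: c1_def)
    show "integrable M1 (\<lambda>t. exp (- s * t))" if "s > c1" for s
    proof -
      have "integrable \<mu> (\<lambda>t. exp (- (s + w0) * t))" using mu_int[of "s+w0"] that by (auto simp: c1_def)
      moreover have "(\<lambda>t. exp (- w0 * t) *\<^sub>R exp (- s * t)) = (\<lambda>t. exp (- (s + w0) * t))"
        by (auto simp: mult_exp_exp algebra_simps)
      ultimately show ?thesis unfolding M1_def by (subst integrable_density) (auto simp: bmu)
    qed
  qed
  interpret I2: lap \<mu>g 0
  proof
    show "integrable \<mu>g (\<lambda>t. exp (- s * t))" if "s > 0" for s using mug_int[OF that] .
  qed (auto simp: sets_mug mug_neg)

  have g_eq1: "g s = I1.Lk 0 s" if "s > c1" for s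
  proof -
    have p: "s + w0 > 0" using that by (auto simp: c1_def)
    have "g s = f (s + w0)" using p by (simp add: g_def f_ext_def)
    also have "\<dots> = (\<integral>t. exp (- (s + w0) * t) \<partial>\<mu>)" by (rule f_lap[OF p])
    also have "\<dots> = (\<integral>t. exp (- w0 * t) *\<^sub>R exp (- s * t) \<partial>\<mu>)"
      by (rule Bochner_Integration.integral_cong) (auto simp: mult_exp_exp algebra_simps)
    also have "\<dots> = (\<integral>t. exp (- s * t) \<partial>M1)"
      unfolding M1_def by (subst integral_density) (auto simp: bmu)
    finally show ?thesis by (simp add: I1.Lk0)
  qed
  have g_eq2: "g s = I2.Lk 0 s" if "s > 0" for s
    using g_lap[OF that] by (simp add: I2.Lk0)
  have dg1: "(deriv ^^ n) g s = I1.Lk n s" if "s > c1" for n s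
  proof -
    have "(deriv ^^ n) g s = (deriv ^^ n) (I1.Lk 0) s"
      by (rule funpow_deriv_cong[where S="{c1<..}"]) (use g_eq1 that in auto)
    then show ?thesis using I1.deriv_Lk[OF that] by simp
  qed
  have dg2: "(deriv ^^ n) g s = I2.Lk n s" if "s > 0" for n s
  proof -
    have "(deriv ^^ n) g s = (deriv ^^ n) (I2.Lk 0) s"
      by (rule funpow_deriv_cong[where S="{0<..}"]) (use g_eq2 that in auto)
    then show ?thesis using I2.deriv_Lk[OF that] by simp
  qed

  define A where "A n l = (- l) ^ n * (deriv ^^ n) g l / fact n" for n l
  define cm where "cm = max c1 s0"
  have cm: "cm \<ge> c1" "cm \<ge> s0" "cm > 0" using s0 by (auto simp: cm_def)
  define S where "S p q l = (\<Sum>n\<in>Win p q l. A n l)" for p q l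
  have intW1: "(\<integral>t. Wf p q l t \<partial>M1) = S p q l" if "l > cm" for p q l
  proof -
    have l: "l > c1" using that cm by simp
    show ?thesis unfolding I1.integral_Wf[OF l] S_def A_def
      by (intro sum.cong refl) (simp add: dg1[OF l])
  qed
  have intW2: "(\<integral>t. Wf p q l t \<partial>\<mu>g) = S p q l" if "l > cm" for p q l
  proof -
    have l: "l > 0" using that cm by simp
    show ?thesis unfolding I2.integral_Wf[OF l] S_def A_def
      by (intro sum.cong refl) (simp add: dg2[OF l])
  qed
  have A_anti: "A n l \<le> A m l" if "l > s0" "m \<le> n" for m n l
    using that(2)
  proof (induction n rule: dec_induct)
    case (step n)
    have "A (Suc n) l \<le> A n l" unfolding A_def using hyp[OF that(1), of n] .
    then show ?case using step.IH by linarith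
  qed simp
  have ev: "eventually (\<lambda>j. real j > cm) sequentially"
    by (rule eventually_compose_filterlim[OF eventually_gt_at_top filterlim_real_sequentially])

  have mug_pt: "emeasure \<mu>g {x} = 0" for x
    unfolding mug_eq by (rule null_density_singleton) (use d_meas in measurable)
  have limS: "(\<lambda>j. S p q (real j)) \<longlonglongrightarrow> measure \<mu>g {p<..<q}" if "0 \<le> p" "p < q" for p q
    using I2.window_lim_null[OF that mug_pt mug_pt]
    by (rule Lim_transform_eventually) (use ev in \<open>eventually_elim, simp add: intW2\<close>)
  have bnd1: "measure M1 {p<..<q} \<le> measure \<mu>g {p<..<q}" "measure \<mu>g {p<..<q} \<le> measure M1 {p..q}"
    if "0 \<le> p" "p < q" for p q
  proof -
    have l: "(\<lambda>j. \<integral>t. Wf p q (real j) t \<partial>M1) \<longlonglongrightarrow> measure \<mu>g {p<..<q}"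
      using limS[OF that]
      by (rule Lim_transform_eventually) (use ev in \<open>eventually_elim, simp add: intW1\<close>)
    show "measure M1 {p<..<q} \<le> measure \<mu>g {p<..<q}" "measure \<mu>g {p<..<q} \<le> measure M1 {p..q}"
      using I1.window_bounds[OF that l] by auto
  qed

  define D where "D a b = measure \<mu>g {a<..b}" for a b
  have D_open: "measure \<mu>g {a<..<b} = D a b" if "a < b" for a b
  proof -
    have u: "{a<..b} = {a<..<b} \<union> {b}" using that by auto
    have "{b} \<in> null_sets \<mu>g" using mug_pt[of b] by (auto simp: null_sets_def sets_mug)
    then have "emeasure \<mu>g {a<..b} = emeasure \<mu>g {a<..<b}"
      unfolding u by (intro emeasure_Un_null_set) (auto simp: sets_mug)
    then show ?thesis by (simp add: D_def measure_def)
  qed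
  have mug_fin: "emeasure \<mu>g A \<noteq> top" if "A \<subseteq> {..b}" for A b
    using I2.fin_bounded[OF that] by simp
  interpret C: conc D
  proof
    show "0 \<le> D a b" for a b by (simp add: D_def)
    show "D a c = D a b + D b c" if "0 < a" "a < b" "b < c" for a b c
    proof -
      have u: "{a<..c} = {a<..b} \<union> {b<..c}" using that by auto
      show ?thesis unfolding D_def u
      proof (rule measure_Union)
        have "{a<..b} \<subseteq> {..c}" "{b<..c} \<subseteq> {..c}" using that by auto
        then show "emeasure \<mu>g {a<..b} \<noteq> \<infinity>" "emeasure \<mu>g {b<..c} \<noteq> \<infinity>"
          using mug_fin by auto
      qed (auto simp: sets_mug)
    qed
    show "(y - x) * D y z \<le> (z - y) * D x y" if xyz: "0 < x" "x < y" "y < z" for x y z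
    proof -
      let ?c1 = "\<lambda>j::nat. real (card (Win x y (real j)))"
      let ?c2 = "\<lambda>j::nat. real (card (Win y z (real j)))"
      have key: "?c1 j * S y z (real j) \<le> ?c2 j * S x y (real j)" if j: "real j > cm" for j
      proof -
        define k where "k = nat \<lceil>y * real j\<rceil>"
        have js: "real j > s0" using j cm by simp
        have s1: "?c1 j * A k (real j) \<le> S x y (real j)"
          unfolding S_def
        proof (rule sum_bounded_below)
          fix n assume "n \<in> Win x y (real j)"
          then have "n \<le> k" by (auto simp: Win_def k_def)
          then show "A k (real j) \<le> A n (real j)" by (rule A_anti[OF js])
        qed
        have s2: "S y z (real j) \<le> ?c2 j * A k (real j)"
          unfolding S_def
        proof (rule sum_bounded_above)
          fix n assume "n \<in> Win y z (real j)"
          then have "k \<le> n" by (auto simp: Win_def k_def)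
          then show "A n (real j) \<le> A k (real j)" by (rule A_anti[OF js])
        qed
        have "?c1 j * S y z (real j) \<le> ?c1 j * (?c2 j * A k (real j))"
          by (rule mult_left_mono[OF s2]) simp
        also have "\<dots> = ?c2 j * (?c1 j * A k (real j))" by simp
        also have "\<dots> \<le> ?c2 j * S x y (real j)"
          by (rule mult_left_mono[OF s1]) simp
        finally show ?thesis .
      qed
      have l1: "(\<lambda>j. ?c1 j / real j * S y z (real j)) \<longlonglongrightarrow> (y - x) * measure \<mu>g {y<..<z}"
        by (intro tendsto_mult card_Win_lim limS) (use xyz in auto)
      have l2: "(\<lambda>j. ?c2 j / real j * S x y (real j)) \<longlonglongrightarrow> (z - y) * measure \<mu>g {x<..<y}"
        by (intro tendsto_mult card_Win_lim limS) (use xyz in auto)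
      have "(y - x) * measure \<mu>g {y<..<z} \<le> (z - y) * measure \<mu>g {x<..<y}"
      proof (rule LIMSEQ_le[OF l1 l2])
        obtain N where N: "\<And>j. j \<ge> N \<Longrightarrow> real j > cm" using ev by (auto simp: eventually_sequentially)
        show "\<exists>N. \<forall>j\<ge>N. ?c1 j / real j * S y z (real j) \<le> ?c2 j / real j * S x y (real j)"
        proof (intro exI allI impI)
          fix j assume "j \<ge> N"
          then have j: "real j > cm" by (rule N)
          then have jp: "real j > 0" using cm by simp
          have "?c1 j * S y z (real j) / real j \<le> ?c2 j * S x y (real j) / real j"
            using key[OF j] jp by (intro divide_right_mono) auto
          then show "?c1 j / real j * S y z (real j) \<le> ?c2 j / real j * S x y (real j)"
            by (simp add: field_simps)
        qed
      qed
      then show ?thesis using D_open xyz by simp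
    qed
  qed

have mug0: "emeasure \<mu>g {..0} = 0"
  proof -
    have "emeasure \<mu>g {..0} = (\<integral>\<^sup>+t. ennreal (indicator {0<..} t * d t) * indicator {..0} t \<partial>lborel)"
      unfolding mug_eq by (rule emeasure_density) (use d_meas in auto)
    also have "\<dots> = (\<integral>\<^sup>+t. 0 \<partial>lborel)"
    proof -
      have "\<And>t. t \<in> space lborel \<Longrightarrow> ennreal (indicator {0<..} t * d t) * indicator {..0} t = 0"
        by (auto simp: indicator_def)
      from nn_integral_cong[OF this] show ?thesis by simp
    qed
    finally show ?thesis by simp
  qed
  have M2M3: "\<mu>g = C.M3"
  proof (rule meas_eq_pos)
    show "sets \<mu>g = sets borel" by (rule sets_mug)
    show "sets C.M3 = sets borel" by simp
    show "emeasure \<mu>g {..0} = 0" by (rule mug0)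
    show "emeasure C.M3 {..0} = 0"
    proof -
      have "emeasure C.M3 {..0} = (\<integral>\<^sup>+t. ennreal (C.phi t) * indicator {..0} t \<partial>lborel)"
        unfolding C.M3_def by (rule emeasure_density) auto
      also have "\<dots> = (\<integral>\<^sup>+t. 0 \<partial>lborel)"
      proof -
        have "\<And>t. t \<in> space lborel \<Longrightarrow> ennreal (C.phi t) * indicator {..0} t = 0"
          by (auto simp: indicator_def C.phi_def)
        from nn_integral_cong[OF this] show ?thesis by simp
      qed
      finally show ?thesis by simp
    qed
    show "emeasure \<mu>g {..b} \<noteq> top" for b using I2.fin_below[of b] by simp
    show "emeasure \<mu>g {a<..b} = emeasure C.M3 {a<..b}" if "0 < a" "a < b" for a b
    proof -
      have "emeasure \<mu>g {a<..b} = ennreal (D a b)"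
        unfolding D_def by (rule emeasure_eq_ennreal_measure, rule mug_fin[of _ b]) auto
      then show ?thesis using C.M3_eq_D[OF that] by simp
    qed
  qed
  have M1_0: "emeasure M1 {0} = 0"
  proof -
    have "(\<lambda>j. g (real j)) \<longlonglongrightarrow> 0"
      by (rule filterlim_compose[OF glim filterlim_real_sequentially])
    moreover have "(\<lambda>j. g (real j)) \<longlonglongrightarrow> measure M1 {0}"
    proof (rule Lim_transform_eventually[OF I1.lap_inf])
      show "eventually (\<lambda>j. (\<integral>t. exp (- real j * t) \<partial>M1) = g (real j)) sequentially"
        using ev
      proof eventually_elim
        case (elim j)
        then have "real j > c1" using cm by simp
        then show ?case by (simp add: g_eq1 I1.Lk0)
      qed
    qed
    ultimately have "measure M1 {0} = 0" using LIMSEQ_unique by blast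
    moreover have "emeasure M1 {0} \<noteq> top" using I1.fin_bounded[of "{0}" 0] by simp
    ultimately show ?thesis using emeasure_eq_ennreal_measure by fastforce
  qed
  have M1fm: "A \<in> fmeasurable M1" if "A \<subseteq> {..b}" "A \<in> sets borel" for A b
    using I1.fin_bounded[OF that(1)] that(2) by (auto simp: fmeasurable_def)
  have M1fin: "emeasure M1 A \<noteq> top" if "A \<subseteq> {..b}" for A b
    using I1.fin_bounded[OF that] by simp
  have Dsl: "D a (a + e) \<le> e * C.dt a" if "0 < a" "0 < e" for a e
  proof -
    have "D a (a + e) = e * C.sl a (a + e)" using that by (simp add: C.sl_def)
    also have "\<dots> \<le> e * C.dt a" using that by (intro mult_left_mono C.sl_le_dt) auto
    finally show ?thesis .
  qed
  have M1D: "measure M1 {a<..b} = D a b" if ab: "0 < a" "a < b" for a b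
  proof (rule antisym)
    show "measure M1 {a<..b} \<le> D a b"
    proof (rule field_le_epsilon)
      fix e :: real assume e: "0 < e"
      define ep where "ep = e / (C.dt b + 1)"
      have dtb: "0 \<le> C.dt b" using ab by (intro C.dt_nonneg) auto
      have ep: "0 < ep" using e dtb by (simp add: ep_def)
      have "measure M1 {a<..b} \<le> measure M1 {a<..<b + ep}"
        by (rule measure_mono_fmeasurable) (use ep in \<open>auto intro!: M1fm[of _ "b + ep"]\<close>)
      also have "\<dots> \<le> measure \<mu>g {a<..<b + ep}"
        by (rule bnd1(1)) (use ab ep in auto)
      also have "\<dots> = D a (b + ep)" by (rule D_open) (use ab ep in auto)
      also have "\<dots> = D a b + D b (b + ep)" by (rule C.D_add) (use ab ep in auto)
      also have "D b (b + ep) \<le> ep * C.dt b" by (rule Dsl) (use ab ep in auto)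
      also have "ep * C.dt b \<le> e"
      proof -
        have "ep * C.dt b = e * (C.dt b / (C.dt b + 1))" by (simp add: ep_def)
        also have "\<dots> \<le> e * 1" using e dtb by (intro mult_left_mono) auto
        finally show ?thesis by simp
      qed
      finally show "measure M1 {a<..b} \<le> D a b + e" by simp
    qed
    show "D a b \<le> measure M1 {a<..b}"
    proof (rule field_le_epsilon)
      fix e :: real assume e: "0 < e"
      define ep where "ep = min (e / (C.dt a + 1)) ((b - a) / 2)"
      have dta: "0 \<le> C.dt a" using ab by (intro C.dt_nonneg) auto
      have "ep \<le> (b - a) / 2" unfolding ep_def by (rule min.cobounded2)
      then have ep: "0 < ep" "a + ep < b" using e dta ab by (auto simp: ep_def)
      have "D a b = D a (a + ep) + D (a + ep) b" by (rule C.D_add) (use ab ep in auto)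
      also have "D a (a + ep) \<le> ep * C.dt a" by (rule Dsl) (use ab ep in auto)
      also have "ep * C.dt a \<le> e"
      proof -
        have "ep * C.dt a \<le> e / (C.dt a + 1) * C.dt a"
          using dta by (intro mult_right_mono) (auto simp: ep_def)
        also have "\<dots> = e * (C.dt a / (C.dt a + 1))" by simp
        also have "\<dots> \<le> e * 1" using e dta by (intro mult_left_mono) auto
        finally show ?thesis by simp
      qed
      also have "D (a + ep) b = measure \<mu>g {a + ep<..<b}" by (rule D_open[symmetric]) (use ep in auto)
      also have "\<dots> \<le> measure M1 {a + ep..b}" by (rule bnd1(2)) (use ab ep in auto)
      also have "\<dots> \<le> measure M1 {a<..b}"
        by (rule measure_mono_fmeasurable) (use ep in \<open>auto intro!: M1fm[of _ b]\<close>)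
      finally show "D a b \<le> measure M1 {a<..b} + e" by simp
    qed
  qed
  have M1M2: "M1 = \<mu>g"
  proof (rule meas_eq_pos)
    show "sets M1 = sets borel" by (rule I1.sets_M)
    show "sets \<mu>g = sets borel" by (rule sets_mug)
    show "emeasure M1 {..0} = 0"
    proof -
      have u: "{..0::real} = {..<0} \<union> {0}" by auto
      have "emeasure M1 {..0} = emeasure M1 {..<0} + emeasure M1 {0}"
        unfolding u by (rule plus_emeasure[symmetric]) (auto simp: I1.sets_M)
      then show ?thesis using I1.neg0 M1_0 by simp
    qed
    show "emeasure \<mu>g {..0} = 0" by (rule mug0)
    show "emeasure M1 {..b} \<noteq> top" for b by (rule M1fin) auto
    show "emeasure M1 {a<..b} = emeasure \<mu>g {a<..b}" if "0 < a" "a < b" for a b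
    proof -
      have "emeasure M1 {a<..b} = ennreal (measure M1 {a<..b})"
        by (rule emeasure_eq_ennreal_measure, rule M1fin[of _ b]) auto
      moreover have "emeasure \<mu>g {a<..b} = ennreal (D a b)"
        unfolding D_def by (rule emeasure_eq_ennreal_measure, rule mug_fin[of _ b]) auto
      ultimately show ?thesis using M1D[OF that] by simp
    qed
  qed

  define \<nu> where "\<nu> t = exp (w0 * t) * C.phi t" for t
  have phi_nn: "0 \<le> C.phi t" for t
    by (cases "t > 0") (auto simp: C.phi_def intro: C.dt_nonneg)
  have phi_ind: "indicator {0<..} t * C.phi t = C.phi t" for t
    by (auto simp: C.phi_def indicator_def)
  have e1: "density M1 (\<lambda>t. ennreal (exp (w0 * t))) = \<mu>"
  proof -
    have "density M1 (\<lambda>t. ennreal (exp (w0 * t))) = density \<mu> (\<lambda>t. ennreal (exp (- w0 * t)) * ennreal (exp (w0 * t)))"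
      unfolding M1_def by (rule density_density_eq) (auto simp: bmu)
    also have "(\<lambda>t. ennreal (exp (- w0 * t)) * ennreal (exp (w0 * t))) = (\<lambda>t. 1)"
      by (auto simp: ennreal_mult[symmetric] mult_exp_exp)
    finally show ?thesis by (simp add: density_1)
  qed
  have e2: "density C.M3 (\<lambda>t. ennreal (exp (w0 * t))) = density lborel (\<lambda>t. ennreal (indicator {0<..} t * \<nu> t))"
  proof -
    have "density C.M3 (\<lambda>t. ennreal (exp (w0 * t))) = density lborel (\<lambda>t. ennreal (C.phi t) * ennreal (exp (w0 * t)))"
      unfolding C.M3_def by (rule density_density_eq) auto
    also have "(\<lambda>t. ennreal (C.phi t) * ennreal (exp (w0 * t))) = (\<lambda>t. ennreal (indicator {0<..} t * \<nu> t))"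
    proof
      fix t
      have "indicator {0<..} t * \<nu> t = C.phi t * exp (w0 * t)"
        unfolding \<nu>_def using phi_ind[of t] by (simp add: algebra_simps)
      then show "ennreal (C.phi t) * ennreal (exp (w0 * t)) = ennreal (indicator {0<..} t * \<nu> t)"
        using phi_nn[of t] by (simp add: ennreal_mult)
    qed
    finally show ?thesis .
  qed
  have mu_eq: "\<mu> = density lborel (\<lambda>t. ennreal (indicator {0<..} t * \<nu> t))"
    using e1 e2 M1M2 M2M3 by simp
  show "\<exists>\<nu>. has_density_on_pos \<mu> \<nu> \<and> antimono_on {0<..} (\<lambda>t. exp (- w0 * t) * \<nu> t)"
  proof (intro exI conjI)
    show "has_density_on_pos \<mu> \<nu>"
      unfolding has_density_on_pos_def
    proof (intro conjI allI impI)
      show "\<nu> \<in> borel_measurable borel" unfolding \<nu>_def using C.phi_meas by measurable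
      show "0 \<le> \<nu> t" for t unfolding \<nu>_def using phi_nn[of t] by simp
    qed (rule mu_eq)
    have ev_eq: "exp (- w0 * t) * \<nu> t = C.dt t" if "t > 0" for t
    proof -
      have "exp (- w0 * t) * \<nu> t = (exp (- w0 * t) * exp (w0 * t)) * C.phi t"
        by (simp add: \<nu>_def)
      also have "\<dots> = C.phi t" by (simp add: mult_exp_exp)
      finally show ?thesis using that by (simp add: C.phi_def)
    qed
    show "antimono_on {0<..} (\<lambda>t. exp (- w0 * t) * \<nu> t)"
      unfolding monotone_on_def
    proof (intro ballI impI)
      fix x y :: real assume "x \<in> {0<..}" "y \<in> {0<..}" "x \<le> y"
      then show "exp (- w0 * y) * \<nu> y \<le> exp (- w0 * x) * \<nu> x"
        using ev_eq C.dt_anti by simp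
    qed
  qed
qed


end
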